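(* Let $d > 1$ be an integer and $p$ a prime. Consider the game in which Nora and Wanda choose the coefficients of a degree $d$ polynomial from $\mathbb{Q}$, and Wanda wins if and only if the final polynomial has a root in $D_2$, where $D_2$ is any (unital) subring of $\mathbb{Q}_p$, the field of $p$-adic numbers. Then the player who makes the last move has a winning strategy.
   Context: The game: Nora and Wanda alternately choose coefficients of a polynomial $f(x) = a_d x^d + \cdots + a_1 x + a_0$; on each move the current player picks a not-yet-chosen coefficient $a_i$ and assigns it a value in $\mathbb{Q}$, subject to $a_d \neq 0$ and $a_0 \neq 0$. After all $d+1$ coefficients are chosen, Wanda wins if $f$ has a root in $D_2$, and Nora wins otherwise. Who moves first is fixed in advance, which determines who makes the last move; "the player who makes the last move has a winning strategy" is asserted for either such assignment. *)

theory Defs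
  imports Complex_Main "HOL-Computational_Algebra.Computational_Algebra"
begin

definition padic_val_rat :: "nat \<Rightarrow> rat \<Rightarrow> int" where
  "padic_val_rat p q =
     int (multiplicity (int p) (fst (quotient_of q)))
   - int (multiplicity (int p) (snd (quotient_of q)))"

definition padic_abs_rat :: "nat \<Rightarrow> rat \<Rightarrow> real" where
  "padic_abs_rat p q = (if q = 0 then 0 else real p powi (- padic_val_rat p q))"

text \<open>A field K of characteristic 0 (Q embedded via of_rat) together with an absolute
  value av is (a copy of) Q_p iff av extends the p-adic absolute value of Q, K is
  complete for av and Q is dense in K.  Completions are unique up to isometric
  isomorphism, so this determines Q_p.\<close>

definition is_Qp :: "nat \<Rightarrow> ('k::field_char_0 \<Rightarrow> real) \<Rightarrow> bool" where
  "is_Qp p av \<longleftrightarrow>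
     (\<forall>x. av x \<ge> 0) \<and>
     (\<forall>x. av x = 0 \<longleftrightarrow> x = 0) \<and>
     (\<forall>x y. av (x * y) = av x * av y) \<and>
     (\<forall>x y. av (x + y) \<le> av x + av y) \<and>
     (\<forall>q. av (of_rat q) = padic_abs_rat p q) \<and>
     (\<forall>X::nat \<Rightarrow> 'k.
        (\<forall>e>0. \<exists>N. \<forall>m\<ge>N. \<forall>n\<ge>N. av (X m - X n) < e) \<longrightarrow>
        (\<exists>L. \<forall>e>0. \<exists>N. \<forall>n\<ge>N. av (X n - L) < e)) \<and>
     (\<forall>x. \<forall>e>0. \<exists>q. av (x - of_rat q) < e)"

definition unital_subring :: "'k::ring_1 set \<Rightarrow> bool" where
  "unital_subring D \<longleftrightarrow> 1 \<in> D \<and> (\<forall>x\<in>D. \<forall>y\<in>D. x - y \<in> D \<and> x * y \<in> D)"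

text \<open>A position records which coefficients a_0..a_d have been chosen (Some value).
  A legal move picks an unchosen index i \<le> d and a rational value, nonzero if i = 0
  or i = d.\<close>

type_synonym position = "nat \<Rightarrow> rat option"

definition legal_move :: "nat \<Rightarrow> position \<Rightarrow> nat \<Rightarrow> rat \<Rightarrow> bool" where
  "legal_move d s i c \<longleftrightarrow> i \<le> d \<and> s i = None \<and> ((i = 0 \<or> i = d) \<longrightarrow> c \<noteq> 0)"

text \<open>can_force d G b k s: with k moves remaining from position s, the player X whose
  goal is G (evaluated on the final position) can force G; b says whether X is to move.  For a finite game this is exactly "X has a winning strategy".\<close>

fun can_force :: "nat \<Rightarrow> (position \<Rightarrow> bool) \<Rightarrow> bool \<Rightarrow> nat \<Rightarrow> position \<Rightarrow> bool" where
  "can_force d G b 0 s = G s"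
| "can_force d G b (Suc k) s =
     (if b then (\<exists>i c. legal_move d s i c \<and> can_force d G False k (s(i := Some c)))
      else (\<forall>i c. legal_move d s i c \<longrightarrow> can_force d G True k (s(i := Some c))))"

definition final_poly :: "nat \<Rightarrow> position \<Rightarrow> rat poly" where
  "final_poly d s = (\<Sum>i\<le>d. monom (the (s i)) i)"

definition wanda_goal :: "nat \<Rightarrow> 'k::field_char_0 set \<Rightarrow> position \<Rightarrow> bool" where
  "wanda_goal d D s \<longleftrightarrow> (\<exists>x\<in>D. poly (map_poly of_rat (final_poly d s)) x = 0)"

definition nora_goal :: "nat \<Rightarrow> 'k::field_char_0 set \<Rightarrow> position \<Rightarrow> bool" where
  "nora_goal d D s \<longleftrightarrow> \<not> wanda_goal d D s"

definition wanda_wins :: "nat \<Rightarrow> 'k::field_char_0 set \<Rightarrow> bool \<Rightarrow> bool" where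
  "wanda_wins d D wanda_first = can_force d (wanda_goal d D) wanda_first (d + 1) (\<lambda>_. None)"

definition nora_wins :: "nat \<Rightarrow> 'k::field_char_0 set \<Rightarrow> bool \<Rightarrow> bool" where
  "nora_wins d D wanda_first = can_force d (nora_goal d D) (\<not> wanda_first) (d + 1) (\<lambda>_. None)"

text \<open>Moves are numbered 1..d+1; the first mover makes the odd-numbered ones, so
  Wanda makes the last move iff (wanda_first = odd (d+1)).\<close>

definition wanda_moves_last :: "nat \<Rightarrow> bool \<Rightarrow> bool" where
  "wanda_moves_last d wanda_first \<longleftrightarrow> (wanda_first \<longleftrightarrow> odd (d + 1))"

end

theory Submission
  imports Defs
begin

locale qp =
  fixes p :: nat and av :: "'k::field_char_0 \<Rightarrow> real"
  assumes prime_p: "prime p" and Q: "is_Qp p av"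
begin

lemma p_gt1: "p > 1" using prime_p prime_gt_1_nat by blast

lemma av_nonneg: "av x \<ge> 0" using Q unfolding is_Qp_def by blast
lemma av_zero_iff: "av x = 0 \<longleftrightarrow> x = 0" using Q unfolding is_Qp_def by blast
lemma av_mult: "av (x * y) = av x * av y" using Q unfolding is_Qp_def by blast
lemma av_tri: "av (x + y) \<le> av x + av y" using Q unfolding is_Qp_def by blast
lemma av_rat: "av (of_rat q) = padic_abs_rat p q" using Q unfolding is_Qp_def by blast
lemma av_dense: "e > 0 \<Longrightarrow> \<exists>q. av (x - of_rat q) < e" using Q unfolding is_Qp_def by blast

lemma av_pos: "x \<noteq> 0 \<Longrightarrow> av x > 0"
  using av_nonneg av_zero_iff by (metis less_eq_real_def)

lemma av_0[simp]: "av 0 = 0" using av_zero_iff by blast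

lemma av_1[simp]: "av 1 = 1"
proof -
  have "av 1 = av 1 * av 1" using av_mult[of 1 1] by simp
  moreover have "av 1 \<noteq> 0" using av_zero_iff by simp
  ultimately show ?thesis by (metis mult_cancel_left1)
qed

lemma av_minus[simp]: "av (- x) = av x"
proof -
  have "av (-1) * av (-1) = 1" using av_mult[of "-1" "-1"] by simp
  hence "av (-1) = 1" using av_nonneg[of "-1"]
    by (metis abs_of_nonneg mult_cancel_right1 power2_eq_1_iff power2_eq_square abs_minus_cancel abs_one)
  thus ?thesis using av_mult[of "-1" x] by simp
qed

lemma av_power: "av (x ^ n) = av x ^ n"
  by (induction n) (simp_all add: av_mult)

lemma av_inverse: "av (inverse x) = inverse (av x)"
proof (cases "x = 0")
  case False
  have "av (inverse x) * av x = 1" using av_mult[of "inverse x" x] False by simp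
  thus ?thesis by (metis inverse_unique mult.commute)
qed simp

lemma av_divide: "av (x / y) = av x / av y"
  by (simp add: divide_inverse av_mult av_inverse)

lemma av_diff_sym: "av (x - y) = av (y - x)"
  by (metis av_minus minus_diff_eq)

lemma padic_int: "padic_abs_rat p (of_int m) = (if m = 0 then 0 else real p powi (- int (multiplicity (int p) m)))"
  by (simp add: padic_abs_rat_def padic_val_rat_def quotient_of_rat_of_int)

lemma av_int: "av (of_int m) = (if m = 0 then 0 else real p powi (- int (multiplicity (int p) m)))"
  using av_rat[of "of_int m"] padic_int by simp

lemma av_int_le1: "av (of_int m) \<le> 1"
  using p_gt1 by (auto simp: av_int power_int_minus field_simps)

lemma av_nat_le1: "av (of_nat m) \<le> 1"
  using av_int_le1[of "int m"] by simp

lemma av_int_ndvd: "\<not> int p dvd m \<Longrightarrow> av (of_int m) = 1"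
  by (auto simp: av_int not_dvd_imp_multiplicity_0)

lemma av_int_dvd: "int p dvd m \<Longrightarrow> av (of_int m) \<le> 1 / p"
proof (cases "m = 0")
  case False
  assume "int p dvd m"
  hence "multiplicity (int p) m \<ge> 1" using False prime_p
    by (metis dvd_imp_multiplicity_le multiplicity_self not_prime_0
    not_prime_unit prime_nat_int_transfer)
  hence "real p powi (- int (multiplicity (int p) m)) \<le> real p powi (-1)"
    using p_gt1 by (intro power_int_increasing) auto
  thus ?thesis using False by (simp add: av_int power_int_minus inverse_eq_divide)
qed (simp add: av_int)

lemma av_p: "av (of_nat p) = 1 / p"
proof -
  have "multiplicity (int p) (int p) = 1" using prime_p
    by simp
  thus ?thesis using av_int[of "int p"] p_gt1 by (simp add: inverse_eq_divide)
qed


lemma av_sum_le: "av (\<Sum>i\<in>A. f i) \<le> (\<Sum>i\<in>A. av (f i))"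
proof (induction A rule: infinite_finite_induct)
  case (insert x F)
  then show ?case using av_tri[of "f x" "sum f F"] by simp
qed simp_all

lemma growth: assumes "(q::real) > 1" shows "\<exists>n. real n + 1 < q ^ n"
proof -
  define h where "h = q - 1"
  have h: "h > 0" using assms h_def by simp
  obtain n :: nat where n: "2 / (h*h) < real n" using reals_Archimedean2 by blast
  have n0: "real n > 0" using n h by (smt (verit) divide_pos_pos mult_pos_pos)
  have "1 + real n * h \<le> q ^ n" using Bernoulli_inequality[of h n] h h_def by simp
  hence "(1 + real n * h)^2 \<le> (q^n)^2" using h n0
    by (intro power_mono) (auto intro!: add_nonneg_nonneg)
  hence A: "(1 + real n * h)^2 \<le> q ^ (2*n)" by (simp add: power_mult[symmetric] mult.commute)
  have "2 < real n * (h*h)" using n h by (simp add: field_simps)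
  hence B: "real n * 2 < real n * (real n * (h*h))" using n0 by simp
  have C: "(1 + real n * h)^2 = 1 + 2 * (real n * h) + real n * (real n * (h*h))"
    by (simp add: power2_eq_square algebra_simps)
  have "0 < real n * h" using n0 h by simp
  hence "real (2*n) + 1 < (1 + real n * h)^2" using B C by simp
  thus ?thesis using A by (intro exI[of _ "2*n"]) linarith
qed

lemma ultra: "av (x + y) \<le> max (av x) (av y)"
proof (rule ccontr)
  assume "\<not> ?thesis"
  hence lt: "max (av x) (av y) < av (x + y)" by linarith
  define M where "M = max (av x) (av y)"
  define t where "t = av (x + y)"
  have M0: "M > 0"
  proof (rule ccontr)
    assume "\<not> M > 0"
    hence "av x = 0" "av y = 0" using av_nonneg[of x] av_nonneg[of y] M_def by auto
    hence "x = 0" "y = 0" using av_zero_iff by auto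
    thus False using lt by simp
  qed
  have bound: "t ^ n \<le> (real n + 1) * M ^ n" for n
  proof -
    have "t ^ n = av ((x+y)^n)" by (simp add: t_def av_power)
    also have "\<dots> = av (\<Sum>k\<le>n. of_nat (n choose k) * x ^ k * y ^ (n - k))"
      by (simp add: binomial_ring)
    also have "\<dots> \<le> (\<Sum>k\<le>n. av (of_nat (n choose k) * x ^ k * y ^ (n - k)))"
      by (rule av_sum_le)
    also have "\<dots> \<le> (\<Sum>k\<le>n. M ^ n)"
    proof (rule sum_mono)
      fix k assume k: "k \<in> {..n}"
      have "av (of_nat (n choose k) * x ^ k * y ^ (n - k)) = av (of_nat (n choose k)) * av x ^ k * av y ^ (n-k)"
        by (simp add: av_mult av_power)
      also have "\<dots> \<le> 1 * M ^ k * M ^ (n - k)"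
        using av_nat_le1 av_nonneg M_def M0
        by (intro mult_mono power_mono) (auto simp: zero_le_mult_iff)
      also have "\<dots> = M ^ n" using k by (simp add: power_add[symmetric])
      finally show "av (of_nat (n choose k) * x ^ k * y ^ (n - k)) \<le> M ^ n" .
    qed
    also have "\<dots> = (real n + 1) * M ^ n" by simp
    finally show ?thesis .
  qed
  have "t / M > 1" using lt M0 by (simp add: M_def t_def)
  then obtain n where n: "real n + 1 < (t/M) ^ n" using growth by blast
  hence "(real n + 1) * M^n < t ^ n" using M0 by (simp add: pos_less_divide_eq power_divide)
  thus False using bound[of n] by simp
qed

lemma ultra_diff: "av (x - y) \<le> max (av x) (av y)"
  using ultra[of x "-y"] by simp

lemma ultra_strict: assumes "av y < av x" shows "av (x + y) = av x"
proof -
  have "av (x + y) \<le> av x" using ultra[of x y] assms by simp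
  moreover have "av x \<le> max (av (x+y)) (av y)" using ultra[of "x+y" "-y"] by simp
  ultimately show ?thesis using assms by linarith
qed

lemma av_sum_max: assumes "\<And>i. i \<in> A \<Longrightarrow> av (f i) \<le> M" "M \<ge> 0"
  shows "av (\<Sum>i\<in>A. f i) \<le> M"
  using assms
proof (induction A rule: infinite_finite_induct)
  case (insert x F)
  have "av (f x) \<le> M" using insert by simp
  moreover have "av (sum f F) \<le> M" using insert by simp
  ultimately show ?case using ultra[of "f x" "sum f F"] insert(1,2) by simp
qed simp_all

lemma av_sum_witness: assumes "finite A" "A \<noteq> {}"
  shows "\<exists>i\<in>A. av (\<Sum>i\<in>A. f i) \<le> av (f i)"
proof -
  define m where "m = Max ((\<lambda>i. av (f i)) ` A)"
  have "m \<in> (\<lambda>i. av (f i)) ` A" using assms unfolding m_def by (intro Max_in) auto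
  then obtain j where j1: "j \<in> A" "m = av (f j)" by blast
  have "\<forall>i\<in>A. av (f i) \<le> m" using assms unfolding m_def by auto
  hence j: "j \<in> A" "\<forall>i\<in>A. av (f i) \<le> av (f j)" using j1 by auto
  hence "av (\<Sum>i\<in>A. f i) \<le> av (f j)" using av_nonneg by (intro av_sum_max) auto
  thus ?thesis using j by blast
qed


lemma powi_inj: "real p powi a = real p powi b \<Longrightarrow> a = b"
  using p_gt1 power_int_strict_increasing[of a b "real p"] power_int_strict_increasing[of b a "real p"]
  by (metis linorder_neqE_linordered_idom of_nat_1 of_nat_less_iff less_irrefl)

lemma av_rat_powi: "q \<noteq> 0 \<Longrightarrow> av (of_rat q) = real p powi (- padic_val_rat p q)"
  by (simp add: av_rat padic_abs_rat_def)

lemma val_group: assumes "x \<noteq> 0" shows "\<exists>k::int. av x = real p powi k"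
proof -
  obtain q where q: "av (x - of_rat q) < av x" using av_dense av_pos[OF assms] by blast
  have "av (x + (of_rat q - x)) = av x" using q by (intro ultra_strict) (simp add: av_diff_sym)
  hence e: "av (of_rat q) = av x" by simp
  hence "q \<noteq> 0" using assms av_zero_iff by force
  thus ?thesis using e av_rat_powi by metis
qed

lemma residue: assumes "av y \<le> 1" shows "\<exists>n<p. av (y - of_nat n) < 1"
proof -
  obtain q where q: "av (y - of_rat q) < 1" using av_dense[of 1] by auto
  have "av (of_rat q) \<le> 1" using ultra_diff[of y "y - of_rat q"] q assms by simp
  obtain a b where ab: "quotient_of q = (a, b)" by (cases "quotient_of q") auto
  have qab: "q = of_int a / of_int b" using ab quotient_of_div by blast
  have b0: "b > 0" using ab quotient_of_denom_pos by blast
  have cop: "coprime a b" using ab quotient_of_coprime by blast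
  have qK: "(of_rat q :: 'k) = of_int a / of_int b" using qab by (simp add: of_rat_divide)
  have P: "int p \<noteq> 0" "\<not> is_unit (int p)" using p_gt1 by auto
  have nb: "\<not> int p dvd b"
  proof
    assume pb: "int p dvd b"
    have "\<not> int p dvd a"
    proof
      assume "int p dvd a"
      hence "is_unit (int p)" using pb cop by (meson coprime_common_divisor)
      thus False using P by blast
    qed
    hence "av (of_int a :: 'k) = 1" using av_int_ndvd by blast
    moreover have "av (of_int b :: 'k) \<le> 1 / p" using av_int_dvd pb by blast
    moreover have "av (of_int b :: 'k) > 0" using b0 av_pos by simp
    ultimately have "av (of_rat q :: 'k) \<ge> p" using qK p_gt1 by (simp add: av_divide field_simps)
    thus False using \<open>av (of_rat q) \<le> 1\<close> p_gt1 by simp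
  qed
  have "coprime b (int p)" using nb prime_p
    by (metis coprime_commute prime_imp_coprime prime_nat_int_transfer)
  then obtain u v where uv: "u * b + v * int p = 1" using bezout_int[of b "int p"] by auto
  define c where "c = (a*u) div int p"
  define n where "n = (a*u) mod int p"
  have n_eq: "n = a*u - int p * c" unfolding n_def c_def by (simp add: minus_div_mult_eq_mod[symmetric] algebra_simps)
  have n_rng: "0 \<le> n" "n < int p" using P p_gt1 unfolding n_def by auto
  have "a * (u * b) = a - a * v * int p" using uv by (metis add_diff_cancel_right' mult.assoc mult.right_neutral right_diff_distrib)
  hence E: "a * (u * b) = a - a * v * int p" .
  have "a - n * b = a - a * (u * b) + int p * c * b" unfolding n_eq by (simp add: algebra_simps)
  also have "\<dots> = a * v * int p + int p * c * b" using E by simp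
  finally have "a - n * b = int p * (a * v + c * b)" by (simp add: algebra_simps)
  hence dv: "int p dvd (a - n * b)" by simp
  have "(of_rat q :: 'k) - of_int n = (of_int (a - n*b)) / of_int b"
    using qK b0 by (simp add: field_simps)
  hence "av ((of_rat q :: 'k) - of_int n) = av (of_int (a - n*b) :: 'k) / av (of_int b :: 'k)"
    by (simp add: av_divide)
  also have "\<dots> = av (of_int (a - n*b) :: 'k)" using av_int_ndvd[OF nb] by simp
  also have "\<dots> \<le> 1 / p" using av_int_dvd[OF dv] .
  also have "\<dots> < 1" using p_gt1 by simp
  finally have A: "av ((of_rat q :: 'k) - of_int n) < 1" .
  have "av (y - of_int n) = av ((y - of_rat q) + (of_rat q - of_int n))" by simp
  also have "\<dots> \<le> max (av (y - of_rat q)) (av ((of_rat q :: 'k) - of_int n))" by (rule ultra)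
  also have "\<dots> < 1" using A q by simp
  finally have "av (y - of_int n) < 1" .
  moreover have "(of_int n :: 'k) = of_nat (nat n)" using n_rng by simp
  moreover have "nat n < p" using n_rng by linarith
  ultimately show ?thesis by metis
qed

end

context qp begin
lemma powi_eq_lemma: "real p powi N = real p powi e * (real p powi k)^d \<Longrightarrow> N = e + k * int d"
proof -
  assume h: "real p powi N = real p powi e * (real p powi k)^d"
  have p0: "real p \<noteq> 0" using p_gt1 by simp
  have "(real p powi k)^d = real p powi (k * int d)" by (rule power_int_power')
  hence "real p powi N = real p powi (e + k * int d)" using h power_int_add[of "real p" e "k * int d"] p0 by simp
  thus ?thesis by (rule powi_inj)
qed

lemma av_cpow: "av (of_rat ((1 / of_nat p) ^ n)) = real p ^ n"
  using av_p p_gt1 by (simp add: of_rat_power av_power av_divide of_rat_divide)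

lemma pair_max:
  fixes A :: "nat \<Rightarrow> 'k"
  assumes "d \<ge> 1" "(\<Sum>j\<le>d. A j * x^j) = 0"
  shows "\<exists>m l. m \<le> d \<and> l \<le> d \<and> m \<noteq> l \<and> av (A m) * av x ^ m = av (A l) * av x ^ l \<and>
     (\<forall>j\<le>d. av (A j) * av x ^ j \<le> av (A m) * av x ^ m)"
proof -
  define T where "T j = av (A j) * av x ^ j" for j
  define M where "M = Max (T ` {..d})"
  have "M \<in> T ` {..d}" unfolding M_def by (intro Max_in) auto
  then obtain m where m: "m \<le> d" "M = T m" by auto
  have mx: "\<forall>j\<le>d. T j \<le> T m"
  proof (intro allI impI)
    fix j assume "j \<le> d"
    hence "T j \<le> Max (T ` {..d})" by (intro Max_ge) auto
    thus "T j \<le> T m" using m M_def by simp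
  qed
  have "(\<Sum>j\<le>d. A j * x^j) = A m * x^m + (\<Sum>j\<in>{..d}-{m}. A j * x^j)"
    using m by (simp add: sum.remove)
  hence "A m * x^m = - (\<Sum>j\<in>{..d}-{m}. A j * x^j)" using assms(2) by (simp add: eq_neg_iff_add_eq_0)
  hence "av (A m * x^m) = av (- (\<Sum>j\<in>{..d}-{m}. A j * x^j))" by (rule arg_cong)
  hence "av (A m * x^m) = av (\<Sum>j\<in>{..d}-{m}. A j * x^j)" by (simp only: av_minus)
  hence e: "T m = av (\<Sum>j\<in>{..d}-{m}. A j * x^j)" by (simp add: T_def av_mult av_power)
  have "(if m = 0 then d else 0) \<in> {..d}-{m}" using assms(1) m by auto
  hence ne: "{..d}-{m} \<noteq> {}" by blast
  obtain l where l: "l \<in> {..d}-{m}" "av (\<Sum>j\<in>{..d}-{m}. A j * x^j) \<le> av (A l * x^l)"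
    using av_sum_witness[OF _ ne] by blast
  have "T m \<le> T l" using e l by (simp add: T_def av_mult av_power)
  moreover have "T l \<le> T m" using mx l by auto
  ultimately have "T m = T l" by linarith
  moreover have "l \<le> d" "m \<noteq> l" using l by auto
  ultimately have "m \<le> d \<and> l \<le> d \<and> m \<noteq> l \<and> T m = T l \<and> (\<forall>j\<le>d. T j \<le> T m)" using m mx by blast
  thus ?thesis unfolding T_def by blast
qed

lemma U1: fixes r :: real assumes "0 < r" "0 < \<alpha>" "\<alpha> \<le> B" "u < d" "\<alpha> * r^d \<le> B * r^u"
  shows "r \<le> B / \<alpha>"
proof (cases "r \<le> 1")
  case True
  have "1 \<le> B / \<alpha>" using assms by simp
  thus ?thesis using True by linarith
next
  case False
  have "r^d = r^u * r^(d-u)" using assms(4) by (simp add: power_add[symmetric])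
  hence "\<alpha> * r^(d-u) * r^u \<le> B * r^u" using assms(5) by (simp add: algebra_simps)
  hence "\<alpha> * r^(d-u) \<le> B" using assms(1) by simp
  moreover have "r^1 \<le> r^(d-u)" using False assms(4) by (intro power_increasing) auto
  hence "\<alpha> * r^1 \<le> \<alpha> * r^(d-u)" using assms(2) by (intro mult_left_mono) auto
  ultimately have "\<alpha> * r \<le> B" by simp
  thus ?thesis using assms(2) by (simp add: field_simps)
qed

lemma L1: fixes r :: real assumes "0 < r" "0 < \<alpha>" "\<alpha> \<le> B" "0 < u" "\<alpha> \<le> B * r^u"
  shows "\<alpha> / B \<le> r"
proof (cases "r \<ge> 1")
  case True
  have "\<alpha> / B \<le> 1" using assms by simp
  thus ?thesis using True by linarith
next
  case False
  have "r^u \<le> r^1" using False assms(1,4) by (intro power_decreasing) auto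
  hence "B * r^u \<le> B * r" using assms by (intro mult_left_mono) auto
  hence "\<alpha> \<le> B * r" using assms by linarith
  thus ?thesis using assms by (simp add: field_simps)
qed

lemma H2: fixes r :: real assumes "0 < r" "r \<le> R" "1 \<le> R" "u \<le> d" shows "r^u \<le> R^d"
proof -
  have "r^u \<le> R^u" using assms by (intro power_mono) auto
  also have "\<dots> \<le> R^d" using assms by (intro power_increasing) auto
  finally show ?thesis .
qed

lemma H1: fixes r :: real assumes "\<rho> \<le> r" "0 < \<rho>" "\<rho> \<le> 1" "k \<le> d" shows "\<rho>^d \<le> r^k"
proof -
  have "\<rho>^d \<le> \<rho>^k" using assms by (intro power_decreasing) auto
  also have "\<dots> \<le> r^k" using assms by (intro power_mono) auto
  finally show ?thesis .
qed


lemma nd1: "1 = int d * (z::int) \<Longrightarrow> d \<ge> 2 \<Longrightarrow> False"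
  by (metis Suc_1 abs_1 abs_of_nat abs_zmult_eq_1 le_numeral_extra(4) not_less_eq_eq of_nat_le_1_iff)

lemma pair_cases:
  fixes T :: "nat \<Rightarrow> real"
  assumes "m \<le> d" "l \<le> d" "m \<noteq> l" "T m = T l" "\<forall>j\<le>d. T j \<le> T m"
  shows "(\<exists>u\<le>d. u \<notin> S \<and> (\<forall>j\<le>d. T j \<le> T u)) \<or>
         (\<exists>a\<in>S. \<exists>b\<in>S. a \<noteq> b \<and> a \<le> d \<and> b \<le> d \<and> T a = T b \<and> (\<forall>j\<le>d. T j \<le> T a))"
proof (cases "m \<in> S")
  case False thus ?thesis using assms by blast
next
  case True
  show ?thesis
  proof (cases "l \<in> S")
    case False thus ?thesis using assms by (metis)
  next
    case True thus ?thesis using \<open>m \<in> S\<close> assms by blast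
  qed
qed

lemma sum_at0: "(d::nat) \<ge> 1 \<Longrightarrow> (\<Sum>j\<le>d. (A::nat\<Rightarrow>'a::comm_ring_1) j * 0^j) = A 0"
  by (simp add: power_0_left if_distrib sum.delta cong: if_cong)

lemma coef_bound:
  fixes a :: "nat \<Rightarrow> rat" and d :: nat
  defines "B \<equiv> (\<Sum>j\<le>d. av (of_rat (a j) :: 'k)) + 1"
  shows "j \<le> d \<Longrightarrow> av (of_rat (a j) :: 'k) \<le> B" and "1 \<le> B"
proof -
  have nn: "\<And>j. j \<in> {..d} \<Longrightarrow> 0 \<le> av (of_rat (a j) :: 'k)" using av_nonneg by auto
  have "0 \<le> (\<Sum>j\<le>d. av (of_rat (a j) :: 'k))" by (intro sum_nonneg) (simp add: av_nonneg)
  thus "1 \<le> B" unfolding B_def by simp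
  assume "j \<le> d"
  hence "av (of_rat (a j) :: 'k) \<le> (\<Sum>j\<le>d. av (of_rat (a j) :: 'k))"
    using nn by (intro member_le_sum) auto
  thus "av (of_rat (a j) :: 'k) \<le> B" unfolding B_def by simp
qed


lemma big_pow: assumes "d \<ge> 1" shows "\<exists>N::int. N \<ge> 0 \<and> Bd < real p ^ nat N \<and> (\<exists>t. N = e + 1 + int d * t)"
proof -
  obtain n where n: "Bd < real p ^ n" using real_arch_pow p_gt1 by (metis of_nat_1 of_nat_less_iff)
  define t where "t = int n + \<bar>e\<bar>"
  define N where "N = e + 1 + int d * t"
  have t0: "t \<ge> 0" unfolding t_def by simp
  have "int d * t \<ge> t" using assms t0 by (simp add: mult_right_mono[of 1 "int d" t, simplified])
  hence N0: "N \<ge> int n" unfolding N_def t_def by linarith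
  have "real p ^ n \<le> real p ^ nat N" using N0 p_gt1 by (intro power_increasing) auto
  thus ?thesis using n N0 N_def by (intro exI[of _ N]) auto
qed

lemma extreme0:
  fixes a :: "nat \<Rightarrow> rat"
  assumes d2: "d \<ge> 2" and ad: "a d \<noteq> 0"
  shows "\<exists>c. c \<noteq> 0 \<and> (\<forall>x::'k. (\<Sum>j\<le>d. of_rat ((a(0:=c)) j) * x^j) \<noteq> 0)"
proof -
  define \<alpha> where "\<alpha> j = av (of_rat (a j) :: 'k)" for j
  define B where "B = (\<Sum>j\<le>d. av (of_rat (a j) :: 'k)) + 1"
  have \<alpha>B: "\<alpha> j \<le> B" if "j \<le> d" for j using coef_bound(1)[OF that] unfolding \<alpha>_def B_def by simp
  have B1: "1 \<le> B" using coef_bound(2) unfolding B_def by simp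
  have \<alpha>d: "\<alpha> d > 0" using ad av_pos unfolding \<alpha>_def by simp
  obtain ed where ed: "\<alpha> d = real p powi ed" using av_rat_powi[OF ad] unfolding \<alpha>_def by blast
  define R where "R = B / \<alpha> d"
  have R1: "1 \<le> R" using \<alpha>B[of d] \<alpha>d unfolding R_def by simp
  obtain N where N: "N \<ge> 0" "B * R^d < real p ^ nat N" "\<exists>t. N = ed + 1 + int d * t"
    using big_pow[of d "B * R^d" ed] d2 by auto
  obtain t where t: "N = ed + 1 + int d * t" using N(3) by blast
  define c where "c = (1 / of_nat p :: rat) ^ nat N"
  have C: "av (of_rat c :: 'k) = real p ^ nat N" unfolding c_def by (rule av_cpow)
  have Cp: "real p ^ nat N = real p powi N" using N(1) by (metis int_nat_eq power_int_of_nat)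
  have c0: "c \<noteq> 0" unfolding c_def using p_gt1 by simp
  show ?thesis
  proof (rule exI[of _ c], intro conjI[OF c0] allI)
    fix x :: 'k
    define A where "A j = (of_rat ((a(0:=c)) j) :: 'k)" for j
    show "(\<Sum>j\<le>d. of_rat ((a(0:=c)) j) * x^j) \<noteq> 0"
    proof
      assume root: "(\<Sum>j\<le>d. of_rat ((a(0:=c)) j) * x^j) = 0"
      hence root': "(\<Sum>j\<le>d. A j * x^j) = 0" unfolding A_def .
      have x0: "x \<noteq> 0"
      proof
        assume "x = 0"
        hence "A 0 = 0" using root' sum_at0[of d A] d2 by simp
        thus False using c0 unfolding A_def by simp
      qed
      define r where "r = av x"
      have r0: "r > 0" using x0 av_pos r_def by simp
      obtain k where k: "r = real p powi k" using val_group[OF x0] r_def by blast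
      define T where "T j = av (A j) * r ^ j" for j
      have T0: "T 0 = real p ^ nat N" unfolding T_def A_def using C by simp
      have Tj: "T j = \<alpha> j * r ^ j" if "j \<noteq> 0" for j unfolding T_def A_def \<alpha>_def using that by simp
      obtain m l where ml: "m \<le> d" "l \<le> d" "m \<noteq> l" "T m = T l" "\<forall>j\<le>d. T j \<le> T m"
        using pair_max[where d=d and A=A and x=x] root' d2 unfolding T_def r_def by auto
      from pair_cases[OF ml, of "{0,d}"]
      show False
      proof (elim disjE exE conjE bexE)
        fix u assume u: "u \<le> d" "u \<notin> {0,d}" "\<forall>j\<le>d. T j \<le> T u"
        have "T d \<le> T u" using u by simp
        moreover have "\<alpha> u * r^u \<le> B * r^u" using \<alpha>B[of u] u r0 by (intro mult_right_mono) auto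
        ultimately have "\<alpha> d * r^d \<le> B * r^u" using Tj[of d] Tj[of u] u d2 by simp
        moreover have "\<alpha> d \<le> B" using \<alpha>B[of d] by simp
        ultimately have "r \<le> R" unfolding R_def using U1[where u=u and d=d, OF r0 \<alpha>d] u by auto
        hence "r^u \<le> R^d" using H2[OF r0 _ R1] u by auto
        have "T 0 \<le> T u" using u by simp
        also have "\<dots> \<le> B * r^u" using Tj[of u] u \<alpha>B[of u] r0
          by (simp add: mult_right_mono)
        also have "\<dots> \<le> B * R^d" using \<open>r^u \<le> R^d\<close> B1 by simp
        finally show False using T0 N(2) by simp
      next
        fix a b assume ab: "a \<in> {0,d}" "b \<in> {0,d}" "a \<noteq> b" "T a = T b"
        hence "T 0 = T d" by auto
        hence "real p powi N = real p powi ed * (real p powi k)^d" using T0 Tj[of d] d2 ed k Cp by simp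
        hence "N = ed + k * int d" by (rule powi_eq_lemma)
        hence "1 = int d * (k - t)" using t by (simp add: algebra_simps)
        thus False using d2 nd1 by blast
      qed
    qed
  qed
qed
end

context qp begin

lemma extremed:
  fixes a :: "nat \<Rightarrow> rat"
  assumes d2: "d \<ge> 2" and a0: "a 0 \<noteq> 0"
  shows "\<exists>c. c \<noteq> 0 \<and> (\<forall>x::'k. (\<Sum>j\<le>d. of_rat ((a(d:=c)) j) * x^j) \<noteq> 0)"
proof -
  define \<alpha> where "\<alpha> j = av (of_rat (a j) :: 'k)" for j
  define B where "B = (\<Sum>j\<le>d. av (of_rat (a j) :: 'k)) + 1"
  have \<alpha>B: "\<alpha> j \<le> B" if "j \<le> d" for j using coef_bound(1)[OF that] unfolding \<alpha>_def B_def by simp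
  have B1: "1 \<le> B" using coef_bound(2) unfolding B_def by simp
  have \<alpha>0: "\<alpha> 0 > 0" using a0 av_pos unfolding \<alpha>_def by simp
  have \<alpha>0B: "\<alpha> 0 \<le> B" using \<alpha>B[of 0] by simp
  obtain e0 where e0: "\<alpha> 0 = real p powi e0" using av_rat_powi[OF a0] unfolding \<alpha>_def by blast
  define \<rho> where "\<rho> = \<alpha> 0 / B"
  have \<rho>: "0 < \<rho>" "\<rho> \<le> 1" using \<alpha>0 \<alpha>0B B1 unfolding \<rho>_def by auto
  obtain N where N: "N \<ge> 0" "B / \<rho>^d < real p ^ nat N" "\<exists>t. N = e0 + 1 + int d * t"
    using big_pow[of d "B / \<rho>^d" e0] d2 by auto
  obtain t where t: "N = e0 + 1 + int d * t" using N(3) by blast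
  define c where "c = (1 / of_nat p :: rat) ^ nat N"
  have C: "av (of_rat c :: 'k) = real p ^ nat N" unfolding c_def by (rule av_cpow)
  have Cp: "real p ^ nat N = real p powi N" using N(1) by (metis int_nat_eq power_int_of_nat)
  have c0: "c \<noteq> 0" unfolding c_def using p_gt1 by simp
  show ?thesis
  proof (rule exI[of _ c], intro conjI[OF c0] allI)
    fix x :: 'k
    define A where "A j = (of_rat ((a(d:=c)) j) :: 'k)" for j
    show "(\<Sum>j\<le>d. of_rat ((a(d:=c)) j) * x^j) \<noteq> 0"
    proof
      assume root: "(\<Sum>j\<le>d. of_rat ((a(d:=c)) j) * x^j) = 0"
      hence root': "(\<Sum>j\<le>d. A j * x^j) = 0" unfolding A_def .
      have x0: "x \<noteq> 0"
      proof
        assume "x = 0"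
        hence "A 0 = 0" using root' sum_at0[of d A] d2 by simp
        thus False using a0 d2 unfolding A_def by simp
      qed
      define r where "r = av x"
      have r0: "r > 0" using x0 av_pos r_def by simp
      obtain k where k: "r = real p powi k" using val_group[OF x0] r_def by blast
      define T where "T j = av (A j) * r ^ j" for j
      have Td: "T d = real p ^ nat N * r^d" unfolding T_def A_def using C by simp
      have Tj: "T j = \<alpha> j * r ^ j" if "j \<noteq> d" for j unfolding T_def A_def \<alpha>_def using that by simp
      obtain m l where ml: "m \<le> d" "l \<le> d" "m \<noteq> l" "T m = T l" "\<forall>j\<le>d. T j \<le> T m"
        using pair_max[where d=d and A=A and x=x] root' d2 unfolding T_def r_def by auto
      from pair_cases[OF ml, of "{0,d}"]
      show False
      proof (elim disjE exE conjE bexE)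
        fix u assume u: "u \<le> d" "u \<notin> {0,d}" "\<forall>j\<le>d. T j \<le> T u"
        have Tu: "T u \<le> B * r^u" using Tj[of u] u \<alpha>B[of u] r0 by (simp add: mult_right_mono)
        have "T 0 \<le> T u" using u by simp
        hence "\<alpha> 0 \<le> B * r^u" using Tu Tj[of 0] d2 by simp
        hence r\<rho>: "\<rho> \<le> r" unfolding \<rho>_def using L1[where u=u, OF r0 \<alpha>0 \<alpha>0B] u by auto
        have "T d \<le> T u" using u by simp
        hence "real p ^ nat N * r^d \<le> B * r^u" using Tu Td by simp
        moreover have "r^d = r^u * r^(d-u)" using u by (simp add: power_add[symmetric])
        ultimately have "real p ^ nat N * r^(d-u) * r^u \<le> B * r^u" by (simp add: algebra_simps)
        hence X: "real p ^ nat N * r^(d-u) \<le> B" using r0 by simp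
        have "\<rho>^d \<le> r^(d-u)" using H1[OF r\<rho> \<rho>] by simp
        hence "real p ^ nat N * \<rho>^d \<le> real p ^ nat N * r^(d-u)" by (intro mult_left_mono) auto
        hence "real p ^ nat N * \<rho>^d \<le> B" using X by linarith
        hence "real p ^ nat N \<le> B / \<rho>^d" using \<rho> by (simp add: field_simps)
        thus False using N(2) by simp
      next
        fix a b assume ab: "a \<in> {0,d}" "b \<in> {0,d}" "a \<noteq> b" "T a = T b"
        hence "T 0 = T d" by auto
        hence "real p powi e0 = real p powi N * (real p powi k)^d" using Td Tj[of 0] d2 e0 k Cp by simp
        hence "e0 = N + k * int d" by (rule powi_eq_lemma)
        hence "1 = int d * (- k - t)" using t by (simp add: algebra_simps)
        thus False using d2 nd1 by blast
      qed
    qed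
  qed
qed

end

lemma dvd_shift: "(m::int) dvd (c + m * t) \<Longrightarrow> m dvd c"
  by (metis dvd_add_times_triv_right_iff mult.commute)

lemma choose_mid:
  fixes m1 m2 A B N0 :: int
  assumes "2 \<le> m1" "2 \<le> m2" "5 \<le> m1 + m2"
  shows "\<exists>N\<ge>N0. \<not> m1 dvd (A - N) \<and> \<not> m2 dvd (N - B)"
proof -
  define t where "t = \<bar>N0\<bar> + \<bar>A\<bar>"
  define X where "X = A + 1 + m1 * t"
  have t0: "t \<ge> 0" unfolding t_def by simp
  have "m1 * t \<ge> 2 * t" using assms(1) t0 by (simp add: mult_right_mono)
  moreover have "t \<ge> N0" "t \<ge> - A" unfolding t_def by auto
  ultimately have XN: "X \<ge> N0" unfolding X_def by linarith
  have nd1: "\<not> m1 dvd 1"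
  proof
    assume "m1 dvd 1" hence "m1 \<le> 1" by (rule zdvd_imp_le) simp
    thus False using assms(1) by simp
  qed
  have "\<not> m1 dvd (A - X)"
  proof
    assume "m1 dvd (A - X)"
    hence "m1 dvd (-1 + m1 * (-t))" unfolding X_def by (simp add: algebra_simps)
    thus False using nd1 dvd_shift by (metis dvd_minus_iff)
  qed
  show ?thesis
  proof (cases "m2 dvd m1")
    case False
    have "\<not> m1 dvd (A - (X + m1))"
    proof
      assume "m1 dvd (A - (X + m1))"
      hence "m1 dvd (-1 + m1 * (-t - 1))" unfolding X_def by (simp add: algebra_simps)
      thus False using nd1 dvd_shift by (metis dvd_minus_iff)
    qed
    moreover have "\<not> (m2 dvd (X - B) \<and> m2 dvd (X + m1 - B))"
    proof
      assume h: "m2 dvd (X - B) \<and> m2 dvd (X + m1 - B)"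
      hence "m2 dvd ((X + m1 - B) - (X - B))" using h by (simp only: dvd_diff)
      thus False using False by simp
    qed
    moreover have "X + m1 \<ge> N0" using XN assms by linarith
    ultimately show ?thesis using XN \<open>\<not> m1 dvd (A - X)\<close> by (metis add_diff_cancel_left' diff_add_cancel)
  next
    case True
    have m13: "m1 \<ge> 3"
    proof (rule ccontr)
      assume "\<not> m1 \<ge> 3"
      hence "m1 = 2" using assms by simp
      hence "m2 \<le> 2" using True by (intro zdvd_imp_le) auto
      thus False using assms \<open>m1 = 2\<close> by simp
    qed
    have nd2: "\<not> m1 dvd 2"
    proof
      assume "m1 dvd 2" hence "m1 \<le> 2" by (rule zdvd_imp_le) simp
      thus False using m13 by simp
    qed
    have "\<not> m1 dvd (A - (X + 1))"
    proof
      assume "m1 dvd (A - (X + 1))"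
      hence "m1 dvd (-2 + m1 * (-t))" unfolding X_def by (simp add: algebra_simps)
      thus False using nd2 dvd_shift by (metis dvd_minus_iff)
    qed
    moreover have "\<not> (m2 dvd (X - B) \<and> m2 dvd (X + 1 - B))"
    proof
      assume h: "m2 dvd (X - B) \<and> m2 dvd (X + 1 - B)"
      hence "m2 dvd ((X + 1 - B) - (X - B))" using h by (simp only: dvd_diff)
      hence "m2 dvd 1" by simp
      hence "m2 \<le> 1" by (rule zdvd_imp_le) simp
      thus False using assms(2) by simp
    qed
    moreover have "X + 1 \<ge> N0" using XN by linarith
    ultimately show ?thesis using XN \<open>\<not> m1 dvd (A - X)\<close> by (metis)
  qed
qed


context qp begin

lemma middle:
  fixes a :: "nat \<Rightarrow> rat"
  assumes d5: "d \<ge> 5" and i2: "2 \<le> i" and id: "i + 2 \<le> d" and a0: "a 0 \<noteq> 0" and ad: "a d \<noteq> 0"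
  shows "\<exists>c. c \<noteq> 0 \<and> (\<forall>x::'k. (\<Sum>j\<le>d. of_rat ((a(i:=c)) j) * x^j) \<noteq> 0)"
proof -
  define \<alpha> where "\<alpha> j = av (of_rat (a j) :: 'k)" for j
  define B where "B = (\<Sum>j\<le>d. av (of_rat (a j) :: 'k)) + 1"
  have \<alpha>B: "\<alpha> j \<le> B" if "j \<le> d" for j using coef_bound(1)[OF that] unfolding \<alpha>_def B_def by simp
  have B1: "1 \<le> B" using coef_bound(2) unfolding B_def by simp
  have \<alpha>0: "\<alpha> 0 > 0" using a0 av_pos unfolding \<alpha>_def by simp
  have \<alpha>0B: "\<alpha> 0 \<le> B" using \<alpha>B[of 0] by simp
  have \<alpha>d: "\<alpha> d > 0" using ad av_pos unfolding \<alpha>_def by simp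
  have \<alpha>dB: "\<alpha> d \<le> B" using \<alpha>B[of d] by simp
  obtain e0 where e0: "\<alpha> 0 = real p powi e0" using av_rat_powi[OF a0] unfolding \<alpha>_def by blast
  obtain ed where ed: "\<alpha> d = real p powi ed" using av_rat_powi[OF ad] unfolding \<alpha>_def by blast
  define \<rho> where "\<rho> = \<alpha> 0 / B"
  have \<rho>: "0 < \<rho>" "\<rho> \<le> 1" using \<alpha>0 \<alpha>0B B1 unfolding \<rho>_def by auto
  define R where "R = B / \<alpha> d"
  have R1: "1 \<le> R" using \<alpha>dB \<alpha>d unfolding R_def by simp
  define Bd where "Bd = B / \<rho>^d + B * R^d + B"
  have Bd: "B / \<rho>^d \<le> Bd" "B * R^d \<le> Bd" "B \<le> Bd" using \<rho> R1 B1 unfolding Bd_def by auto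
  obtain n where n: "Bd < real p ^ n" using real_arch_pow p_gt1 by (metis of_nat_1 of_nat_less_iff)
  obtain N where N: "N \<ge> int n" "\<not> int i dvd (e0 - N)" "\<not> int (d - i) dvd (N - ed)"
    using choose_mid[of "int i" "int (d - i)" "int n" e0 ed] i2 id d5 by auto
  have N0: "N \<ge> 0" using N(1) by simp
  have "real p ^ n \<le> real p ^ nat N" using N(1) p_gt1 by (intro power_increasing) auto
  hence CB: "Bd < real p ^ nat N" using n by linarith
  define C where "C = real p ^ nat N"
  have CB': "B / \<rho>^d < C" "B * R^d < C" "B < C" using CB Bd unfolding C_def by linarith+
  define c where "c = (1 / of_nat p :: rat) ^ nat N"
  have avc: "av (of_rat c :: 'k) = C" unfolding c_def C_def by (rule av_cpow)
  have Cp: "C = real p powi N" unfolding C_def using N0 by (metis int_nat_eq power_int_of_nat)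
  have c0: "c \<noteq> 0" unfolding c_def using p_gt1 by simp
  show ?thesis
  proof (rule exI[of _ c], intro conjI[OF c0] allI)
    fix x :: 'k
    define A where "A j = (of_rat ((a(i:=c)) j) :: 'k)" for j
    show "(\<Sum>j\<le>d. of_rat ((a(i:=c)) j) * x^j) \<noteq> 0"
    proof
      assume root: "(\<Sum>j\<le>d. of_rat ((a(i:=c)) j) * x^j) = 0"
      hence root': "(\<Sum>j\<le>d. A j * x^j) = 0" unfolding A_def .
      have x0: "x \<noteq> 0"
      proof
        assume "x = 0"
        hence "A 0 = 0" using root' sum_at0[of d A] d5 by simp
        thus False using a0 i2 unfolding A_def by simp
      qed
      define r where "r = av x"
      have r0: "r > 0" using x0 av_pos r_def by simp
      obtain k where k: "r = real p powi k" using val_group[OF x0] r_def by blast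
      define T where "T j = av (A j) * r ^ j" for j
      have Ti: "T i = C * r^i" unfolding T_def A_def using avc by simp
      have Tj: "T j = \<alpha> j * r ^ j" if "j \<noteq> i" for j unfolding T_def A_def \<alpha>_def using that by simp
      have TjB: "T j \<le> B * r^j" if "j \<noteq> i" "j \<le> d" for j
        using Tj[OF that(1)] \<alpha>B[OF that(2)] r0 by (simp add: mult_right_mono)
      obtain m l where ml: "m \<le> d" "l \<le> d" "m \<noteq> l" "T m = T l" "\<forall>j\<le>d. T j \<le> T m"
        using pair_max[where d=d and A=A and x=x] root' d5 unfolding T_def r_def by auto
      have i0: "i \<noteq> 0" "i \<noteq> d" "i < d" using i2 id by auto
      from pair_cases[OF ml, of "{0,i,d}"]
      show False
      proof (elim disjE exE conjE bexE)
        fix u assume u: "u \<le> d" "u \<notin> {0,i,d}" "\<forall>j\<le>d. T j \<le> T u"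
        have Tu: "T u \<le> B * r^u" using TjB[of u] u by simp
        have "T i \<le> T u" using u i0 by simp
        hence Ciu: "C * r^i \<le> B * r^u" using Tu Ti by simp
        show False
        proof (cases "u < i")
          case True
          have "T 0 \<le> T u" using u by simp
          hence "\<alpha> 0 \<le> B * r^u" using Tu Tj[of 0] i0 by simp
          hence r\<rho>: "\<rho> \<le> r" unfolding \<rho>_def using L1[where u=u, OF r0 \<alpha>0 \<alpha>0B] u by auto
          have "r^i = r^u * r^(i-u)" using True by (simp add: power_add[symmetric])
          hence "C * r^(i-u) * r^u \<le> B * r^u" using Ciu by (simp add: algebra_simps)
          hence X: "C * r^(i-u) \<le> B" using r0 by simp
          have "\<rho>^d \<le> r^(i-u)" using H1[OF r\<rho> \<rho>] i0 by simp
          hence "C * \<rho>^d \<le> C * r^(i-u)" unfolding C_def by (intro mult_left_mono) auto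
          hence "C * \<rho>^d \<le> B" using X by linarith
          hence "C \<le> B / \<rho>^d" using \<rho> by (simp add: field_simps)
          thus False using CB' by simp
        next
          case False
          hence ui: "i < u" using u by auto
          have "T d \<le> T u" using u by simp
          hence "\<alpha> d * r^d \<le> B * r^u" using Tu Tj[of d] i0 by simp
          hence "r \<le> R" unfolding R_def using U1[where u=u and d=d, OF r0 \<alpha>d \<alpha>dB] u by auto
          hence ru: "r^(u-i) \<le> R^d" using H2[OF r0 _ R1] u by auto
          have "r^u = r^i * r^(u-i)" using ui by (simp add: power_add[symmetric])
          hence "C * r^i \<le> B * r^(u-i) * r^i" using Ciu by (simp add: algebra_simps)
          hence "C \<le> B * r^(u-i)" using r0 by simp
          also have "\<dots> \<le> B * R^d" using ru B1 by simp
          finally show False using CB' by simp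
        qed
      next
        fix a b assume ab: "a \<in> {0,i,d}" "b \<in> {0,i,d}" "a \<noteq> b" "a \<le> d" "b \<le> d" "T a = T b"
          "\<forall>j\<le>d. T j \<le> T a"
        have "T 0 = T i \<or> T i = T d \<or> (T 0 = T d \<and> T i \<le> T 0)"
          using ab i0 by auto
        thus False
        proof (elim disjE conjE)
          assume "T 0 = T i"
          hence "real p powi e0 = real p powi N * (real p powi k)^i" using Ti Tj[of 0] i0 e0 k Cp by simp
          hence "e0 = N + k * int i" by (rule powi_eq_lemma)
          hence "int i dvd (e0 - N)" by simp
          thus False using N(2) by blast
        next
          assume h: "T i = T d"
          have "r^d = r^i * r^(d-i)" using i0 by (simp add: power_add[symmetric])
          hence "C * r^i = \<alpha> d * r^(d-i) * r^i" using h Ti Tj[of d] i0 by (simp add: algebra_simps)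
          hence "C = \<alpha> d * r^(d-i)" using r0 by simp
          hence "real p powi N = real p powi ed * (real p powi k)^(d-i)" using ed k Cp by simp
          hence "N = ed + k * int (d-i)" by (rule powi_eq_lemma)
          hence "int (d-i) dvd (N - ed)" by simp
          thus False using N(3) by blast
        next
          assume h1: "T 0 = T d" and h2: "T i \<le> T 0"
          have "C \<le> B"
          proof (cases "r \<ge> 1")
            case True
            have "C * 1 \<le> C * r^i" using True unfolding C_def by (intro mult_left_mono one_le_power) auto
            also have "\<dots> \<le> \<alpha> 0" using h2 Ti Tj[of 0] i0 by simp
            finally show ?thesis using \<alpha>0B by simp
          next
            case False
            have "r^d \<le> r^i" using False r0 i0 by (intro power_decreasing) auto
            hence "\<alpha> d * r^d \<le> \<alpha> d * r^i" using \<alpha>d by (intro mult_left_mono) auto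
            moreover have "C * r^i \<le> \<alpha> d * r^d" using h1 h2 Ti Tj[of d] i0 by simp
            ultimately have "C * r^i \<le> \<alpha> d * r^i" by linarith
            hence "C \<le> \<alpha> d" using r0 by simp
            thus ?thesis using \<alpha>dB by simp
          qed
          thus False using CB' by simp
        qed
      qed
    qed
  qed
qed

end

lemma sum3:
  fixes A :: "nat \<Rightarrow> 'a::comm_ring_1"
  assumes "0 < i" "i < d" "\<forall>j. j \<le> d \<and> j \<notin> {0,i,d} \<longrightarrow> A j = 0"
  shows "(\<Sum>j\<le>d. A j * x^j) = A 0 + A i * x^i + A d * x^d"
proof -
  have "(\<Sum>j\<le>d. A j * x^j) = (\<Sum>j\<in>{0,i,d}. A j * x^j)"
    using assms by (intro sum.mono_neutral_right) auto
  also have "\<dots> = A 0 + A i * x^i + A d * x^d" using assms by (simp add: algebra_simps)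
  finally show ?thesis .
qed

context qp begin

lemma pow_diff_small:
  assumes "av (y - z) < 1" "av y \<le> 1" "av z \<le> 1"
  shows "av (y^j - z^j) < 1"
proof (induction j)
  case 0 thus ?case by simp
next
  case (Suc j)
  have e: "y^Suc j - z^Suc j = y * (y^j - z^j) + (y - z) * z^j" by (simp add: algebra_simps)
  have "av (y * (y^j - z^j)) < 1"
  proof -
    have "av y * av (y^j - z^j) \<le> 1 * av (y^j - z^j)" using assms av_nonneg by (intro mult_right_mono) auto
    thus ?thesis using Suc by (simp add: av_mult)
  qed
  moreover have "av ((y - z) * z^j) < 1"
  proof -
    have "av z ^ j \<le> 1" using assms av_nonneg by (simp add: power_le_one)
    hence "av (y - z) * av z ^ j \<le> av (y - z) * 1" using av_nonneg by (intro mult_left_mono) auto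
    thus ?thesis using assms by (simp add: av_mult av_power)
  qed
  ultimately show ?case using e ultra[of "y * (y^j - z^j)" "(y - z) * z^j"] by simp
qed

lemma exists_pi: "\<exists>\<pi>::rat. \<pi> \<noteq> 0 \<and> av (of_rat \<pi> :: 'k) = real p powi k"
proof (cases "k \<ge> 0")
  case True
  have "av (of_rat ((1 / of_nat p :: rat) ^ nat k) :: 'k) = real p ^ nat k" by (rule av_cpow)
  moreover have "real p ^ nat k = real p powi k" using True by (metis int_nat_eq power_int_of_nat)
  ultimately show ?thesis using p_gt1 by (intro exI[of _ "(1 / of_nat p :: rat) ^ nat k"]) auto
next
  case False
  have "av (of_rat ((of_nat p :: rat) ^ nat (-k)) :: 'k) = (1 / real p) ^ nat (-k)"
    using av_p by (simp add: of_rat_power av_power)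
  moreover have "(1 / real p) ^ nat (-k) = real p powi k" using False
    by (simp add: power_int_def power_one_over inverse_eq_divide)
  ultimately show ?thesis using p_gt1 by (intro exI[of _ "(of_nat p :: rat) ^ nat (-k)"]) auto
qed

lemma pigeon:
  fixes G :: "nat \<Rightarrow> 'k"
  shows "\<exists>C<p. \<forall>n. 0 < n \<and> n < p \<longrightarrow> av (G n + of_nat C * of_nat n ^ i) \<ge> 1"
proof (rule ccontr)
  assume "\<not> ?thesis"
  hence "\<forall>C\<in>{..<p}. \<exists>n. 0 < n \<and> n < p \<and> av (G n + of_nat C * of_nat n ^ i) < 1" by force
  then obtain g where g: "\<forall>C\<in>{..<p}. 0 < g C \<and> g C < p \<and> av (G (g C) + of_nat C * of_nat (g C) ^ i) < 1"
    by metis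
  have "g ` {..<p} \<subseteq> {1..<p}" using g by (auto simp: Suc_le_eq)
  moreover have "card {1..<p} < card {..<p}" using p_gt1 by simp
  ultimately have "\<not> inj_on g {..<p}" using card_inj_on_le[of g "{..<p}" "{1..<p}"] by fastforce
  then obtain C1 C2 where C: "C1 < p" "C2 < p" "C1 \<noteq> C2" "g C1 = g C2"
    unfolding inj_on_def by blast
  define n where "n = g C1"
  have n: "0 < n" "n < p" using g C unfolding n_def by auto
  have h1: "av (G n + of_nat C1 * of_nat n ^ i) < 1" using g C(1) unfolding n_def by auto
  have h2: "av (G n + of_nat C2 * of_nat n ^ i) < 1" using g C(2) unfolding n_def C(4) by auto
  have "av ((G n + of_nat C1 * of_nat n ^ i) - (G n + of_nat C2 * of_nat n ^ i)) < 1"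
    using ultra_diff[of "G n + of_nat C1 * of_nat n ^ i" "G n + of_nat C2 * of_nat n ^ i"] h1 h2 by simp
  moreover have "(G n + of_nat C1 * of_nat n ^ i) - (G n + of_nat C2 * of_nat n ^ i)
      = (of_int (int C1 - int C2) :: 'k) * of_int (int n) ^ i" by (simp add: algebra_simps)
  moreover have "av (of_int (int C1 - int C2) :: 'k) = 1"
  proof (rule av_int_ndvd)
    show "\<not> int p dvd (int C1 - int C2)"
    proof
      assume "int p dvd (int C1 - int C2)"
      moreover have "int C1 - int C2 \<noteq> 0" using C by simp
      ultimately have "\<bar>int p\<bar> \<le> \<bar>int C1 - int C2\<bar>" by (intro dvd_imp_le_int) auto
      thus False using C by linarith
    qed
  qed
  moreover have "av (of_int (int n) :: 'k) = 1"
  proof (rule av_int_ndvd)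
    show "\<not> int p dvd int n" using n by (auto dest: dvd_imp_le)
  qed
  ultimately show False by (simp add: av_mult av_power)
qed


lemma F_nonzero:
  fixes \<beta> y :: 'k
  assumes b: "av \<beta> = 1" and i: "0 < i" "i < d" and C: "C < p"
    and good: "\<forall>n. 0 < n \<and> n < p \<longrightarrow> av (1 + \<beta> * of_nat n ^ d + of_nat C * of_nat n ^ i) \<ge> 1"
  shows "1 + of_nat C * y^i + \<beta> * y^d \<noteq> 0"
proof -
  have avC: "av (of_nat C :: 'k) \<le> 1" by (rule av_nat_le1)
  have yd: "av (y^d) = av y ^ d" "av (y^i) = av y ^ i" by (simp_all add: av_power)
  consider "av y < 1" | "av y > 1" | "av y = 1" by linarith
  thus ?thesis
  proof cases
    case 1
    have "av y ^ i < 1" "av y ^ d < 1" using 1 i av_nonneg[of y] by (simp_all add: power_less_one_iff)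
    moreover have "av (of_nat C * y^i) \<le> av y ^ i" using avC av_nonneg[of "y^i"] av_nonneg[of "of_nat C"] yd
        by (simp add: av_mult mult_left_le_one_le)
    ultimately have "av (of_nat C * y^i) < 1" "av (\<beta> * y^d) < 1"
      using yd b by (simp_all add: av_mult)
    hence "av (of_nat C * y^i + \<beta> * y^d) < av (1::'k)" using ultra[of "of_nat C * y^i" "\<beta> * y^d"] by simp
    hence "av (1 + (of_nat C * y^i + \<beta> * y^d)) = 1" using ultra_strict by simp
    thus ?thesis by (auto simp: add.assoc)
  next
    case 2
    have yi1: "1 \<le> av y ^ i" using 2 by (simp add: one_le_power)
    have "av y ^ i < av y ^ d" using 2 i by (intro power_strict_increasing) auto
    moreover have "av (1 + of_nat C * y^i) \<le> av y ^ i"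
    proof -
      have "av (of_nat C * y^i) \<le> av y ^ i" using avC av_nonneg[of "y^i"] av_nonneg[of "of_nat C"] yd
        by (simp add: av_mult mult_left_le_one_le)
      thus ?thesis using ultra[of 1 "of_nat C * y^i"] yi1 by simp
    qed
    ultimately have "av (1 + of_nat C * y^i) < av (\<beta> * y^d)" using b yd by (simp add: av_mult)
    hence "av (\<beta> * y^d + (1 + of_nat C * y^i)) = av (\<beta> * y^d)" by (rule ultra_strict)
    moreover have "av (\<beta> * y^d) > 0" using b 2 yd by (simp add: av_mult)
    ultimately show ?thesis by (auto simp: algebra_simps)
  next
    case 3
    obtain n where n: "n < p" "av (y - of_nat n) < 1" using residue[of y] 3 by auto
    have n0: "n \<noteq> 0"
    proof
      assume "n = 0" thus False using n 3 by simp
    qed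
    have avn: "av (of_nat n :: 'k) \<le> 1" by (rule av_nat_le1)
    define Fy where "Fy = 1 + of_nat C * y^i + \<beta> * y^d"
    define Fn where "Fn = 1 + \<beta> * (of_nat n :: 'k) ^ d + of_nat C * of_nat n ^ i"
    have Fn: "av Fn \<ge> 1" using good n n0 unfolding Fn_def by auto
    have di: "av (y^i - of_nat n ^ i) < 1" "av (y^d - of_nat n ^ d) < 1"
      using pow_diff_small[OF n(2)] 3 avn by auto
    have "av (of_nat C * (y^i - of_nat n ^ i)) < 1"
    proof -
      have "av (of_nat C :: 'k) * av (y^i - of_nat n ^ i) \<le> 1 * av (y^i - of_nat n ^ i)"
        using avC av_nonneg by (intro mult_right_mono) auto
      thus ?thesis using di by (simp add: av_mult)
    qed
    moreover have "av (\<beta> * (y^d - of_nat n ^ d)) < 1" using di b by (simp add: av_mult)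
    ultimately have "av (of_nat C * (y^i - of_nat n ^ i) + \<beta> * (y^d - of_nat n ^ d)) < 1"
      using ultra[of "of_nat C * (y^i - of_nat n ^ i)" "\<beta> * (y^d - of_nat n ^ d)"] by simp
    moreover have "Fy - Fn = of_nat C * (y^i - of_nat n ^ i) + \<beta> * (y^d - of_nat n ^ d)"
      unfolding Fy_def Fn_def by (simp add: algebra_simps)
    ultimately have "av (Fy - Fn) < av Fn" using Fn by simp
    hence "av (Fn + (Fy - Fn)) = av Fn" by (rule ultra_strict)
    hence "av Fy \<ge> 1" using Fn by simp
    thus ?thesis unfolding Fy_def by auto
  qed
qed

lemma trinomial:
  fixes a :: "nat \<Rightarrow> rat"
  assumes i: "0 < i" "i < d" and a0: "a 0 \<noteq> 0" and ad: "a d \<noteq> 0"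
    and z: "\<forall>j. 0 < j \<and> j < d \<and> j \<noteq> i \<longrightarrow> a j = 0"
  shows "\<exists>c. \<forall>x::'k. (\<Sum>j\<le>d. of_rat ((a(i:=c)) j) * x^j) \<noteq> 0"
proof -
  have red: "(\<Sum>j\<le>d. of_rat ((a(i:=c)) j) * x^j) = of_rat (a 0) + of_rat c * x^i + of_rat (a d) * (x::'k)^d" for c x
  proof -
    have "\<forall>j. j \<le> d \<and> j \<notin> {0,i,d} \<longrightarrow> (of_rat ((a(i:=c)) j) :: 'k) = 0" using z by auto
    thus ?thesis using sum3[of i d "\<lambda>j. (of_rat ((a(i:=c)) j) :: 'k)" x] i by simp
  qed
  define \<alpha>0 where "\<alpha>0 = av (of_rat (a 0) :: 'k)"
  define \<alpha>d where "\<alpha>d = av (of_rat (a d) :: 'k)"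
  have \<alpha>pos: "\<alpha>0 > 0" "\<alpha>d > 0" using a0 ad av_pos unfolding \<alpha>0_def \<alpha>d_def by auto
  have q0: "a 0 / a d \<noteq> 0" using a0 ad by simp
  obtain e where e: "av (of_rat (a 0 / a d) :: 'k) = real p powi e" using av_rat_powi[OF q0] by blast
  have eq: "\<alpha>0 = \<alpha>d * real p powi e" using e \<alpha>pos unfolding \<alpha>0_def \<alpha>d_def
    by (simp add: of_rat_divide av_divide field_simps)
  show ?thesis
  proof (cases "int d dvd e")
    case False
    show ?thesis
    proof (rule exI[of _ 0], intro allI notI)
      fix x :: 'k assume "(\<Sum>j\<le>d. of_rat ((a(i:=0)) j) * x^j) = 0"
      hence h: "of_rat (a 0) + of_rat (a d) * x^d = 0" using red[of 0 x] by simp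
      have x0: "x \<noteq> 0"
      proof
        assume "x = 0" thus False using h a0 i by (simp add: zero_power)
      qed
      obtain k where k: "av x = real p powi k" using val_group[OF x0] by blast
      have "of_rat (a d) * x^d = - of_rat (a 0)" using h by (simp add: eq_neg_iff_add_eq_0 add.commute)
      hence "av (of_rat (a d) * x^d) = av (- (of_rat (a 0) :: 'k))" by (rule arg_cong)
      hence "\<alpha>d * (real p powi k)^d = \<alpha>0" unfolding \<alpha>0_def \<alpha>d_def by (simp add: av_mult av_power k)
      hence "real p powi e = real p powi 0 * (real p powi k)^d" using eq \<alpha>pos by simp
      hence "e = 0 + k * int d" by (rule powi_eq_lemma)
      thus False using False by simp
    qed
  next
    case True
    then obtain k0 where k0: "e = int d * k0" by blast
    obtain \<pi> where \<pi>: "\<pi> \<noteq> 0" "av (of_rat \<pi> :: 'k) = real p powi k0" using exists_pi by blast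
    define b where "b = a d * \<pi>^d / a 0"
    have "av (of_rat b :: 'k) = \<alpha>d * (real p powi k0)^d / \<alpha>0"
      unfolding b_def \<alpha>0_def \<alpha>d_def using \<pi> by (simp add: of_rat_mult of_rat_divide of_rat_power av_mult av_divide av_power)
    also have "(real p powi k0)^d = real p powi e" using k0 by (simp add: power_int_power' mult.commute)
    finally have avb: "av (of_rat b :: 'k) = 1" using eq \<alpha>pos p_gt1 by simp
    obtain C where C: "C < p" "\<forall>n. 0 < n \<and> n < p \<longrightarrow>
        av ((1 + of_rat b * of_nat n ^ d) + of_nat C * (of_nat n :: 'k) ^ i) \<ge> 1"
      using pigeon[of "\<lambda>n. 1 + of_rat b * of_nat n ^ d" i] by blast
    define c where "c = of_nat C * a 0 / \<pi>^i"
    show ?thesis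
    proof (rule exI[of _ c], intro allI notI)
      fix x :: 'k assume "(\<Sum>j\<le>d. of_rat ((a(i:=c)) j) * x^j) = 0"
      hence h: "of_rat (a 0) + of_rat c * x^i + of_rat (a d) * x^d = 0" using red[of c x] by simp
      define y where "y = x / of_rat \<pi>"
      have xy: "x = of_rat \<pi> * y" unfolding y_def using \<pi> by simp
      have "of_rat (a 0) + of_rat c * x^i + of_rat (a d) * x^d
           = of_rat (a 0) * (1 + of_nat C * y^i + of_rat b * y^d)"
        unfolding xy c_def b_def using \<pi> a0
        by (simp add: of_rat_mult of_rat_divide of_rat_power power_mult_distrib field_simps)
      hence "1 + of_nat C * y^i + of_rat b * y^d = 0" using h a0 by simp
      moreover have "1 + of_nat C * y^i + of_rat b * y^d \<noteq> 0"
        using F_nonzero[OF avb i C(1)] C(2) by simp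
      ultimately show False by simp
    qed
  qed
qed
end

lemma eval_final:
  "poly (map_poly of_rat (final_poly d s)) (x::'k::field_char_0) = (\<Sum>j\<le>d. of_rat (the (s j)) * x^j)"
proof -
  have "map_poly of_rat (final_poly d s) = (\<Sum>j\<le>d. monom (of_rat (the (s j)) :: 'k) j)"
    by (rule poly_eqI) (simp add: final_poly_def coeff_map_poly coeff_sum of_rat_sum coeff_monom if_distrib cong: if_cong)
  thus ?thesis by (simp add: poly_sum poly_monom)
qed

lemma force_gen:
  assumes me: "\<And>k s. Inv (Suc k) s \<Longrightarrow> odd (Suc k) \<Longrightarrow> \<exists>i c. legal_move d s i c \<and> Inv k (s(i := Some c))"
    and opp: "\<And>k s i c. Inv (Suc k) s \<Longrightarrow> even (Suc k) \<Longrightarrow> legal_move d s i c \<Longrightarrow> Inv k (s(i := Some c))"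
    and fin: "\<And>s. Inv 0 s \<Longrightarrow> G s"
  shows "Inv k s \<Longrightarrow> can_force d G (odd k) k s"
proof (induction k arbitrary: s)
  case 0 thus ?case using fin by simp
next
  case (Suc k)
  show ?case
  proof (cases "odd (Suc k)")
    case True
    then obtain i c where "legal_move d s i c" "Inv k (s(i := Some c))" using me Suc.prems by blast
    moreover have "\<not> odd k" using True by simp
    ultimately show ?thesis using Suc.IH True by auto
  next
    case False
    have "odd k" using False by simp
    thus ?thesis using False Suc.IH opp[OF Suc.prems] by auto
  qed
qed

definition unset :: "nat \<Rightarrow> position \<Rightarrow> nat set" where
  "unset d s = {j. j \<le> d \<and> s j = None}"

definition Base :: "nat \<Rightarrow> nat \<Rightarrow> position \<Rightarrow> bool" where
  "Base d k s \<longleftrightarrow> card (unset d s) = k \<and> s 0 \<noteq> Some 0 \<and> s d \<noteq> Some 0"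

lemma unset_finite: "finite (unset d s)" unfolding unset_def by auto

lemma unset_upd: "legal_move d s j v \<Longrightarrow> unset d (s(j := Some v)) = unset d s - {j}"
  unfolding unset_def legal_move_def by auto

lemma unset_mem: "legal_move d s j v \<Longrightarrow> j \<in> unset d s"
  unfolding unset_def legal_move_def by auto

lemma Base_step: "Base d (Suc k) s \<Longrightarrow> legal_move d s j v \<Longrightarrow> Base d k (s(j := Some v))"
  unfolding Base_def using unset_upd[of d s j v] unset_mem[of d s j v] unset_finite[of d s]
  by (auto simp: legal_move_def)

lemma exists_move: "Base d (Suc k) s \<Longrightarrow> \<exists>j. legal_move d s j 1"
proof -
  assume "Base d (Suc k) s"
  hence "unset d s \<noteq> {}" unfolding Base_def by auto
  then obtain j where "j \<in> unset d s" by blast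
  thus ?thesis unfolding unset_def legal_move_def by auto
qed

lemma of_nat_in_D: "unital_subring D \<Longrightarrow> (of_nat n :: 'k::ring_1) \<in> D"
proof (induction n)
  case 0
  have "(1::'k) - 1 \<in> D" using 0 unfolding unital_subring_def by blast
  thus ?case by simp
next
  case (Suc n)
  have z: "(0::'k) \<in> D" using Suc.prems unfolding unital_subring_def by (metis diff_self)
  have "(0::'k) - 1 \<in> D" using z Suc.prems unfolding unital_subring_def by blast
  hence "(of_nat n :: 'k) - (0 - 1) \<in> D" using Suc unfolding unital_subring_def by blast
  thus ?case by (simp add: algebra_simps)
qed

lemma wanda_last:
  fixes D :: "'k::field_char_0 set"
  assumes d2: "d \<ge> 2" and u: "unset d s = {i}" and s0: "s 0 \<noteq> Some 0" and sd: "s d \<noteq> Some 0"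
    and D: "unital_subring D"
  shows "\<exists>c. legal_move d s i c \<and> wanda_goal d D (s(i := Some c))"
proof -
  define a where "a j = the (s j)" for j
  have iu: "i \<le> d" "s i = None" using u unfolding unset_def by auto
  have set: "s j = Some (a j)" if "j \<le> d" "j \<noteq> i" for j
  proof -
    have "j \<notin> unset d s" using u that by auto
    hence "s j \<noteq> None" using that unfolding unset_def by auto
    thus ?thesis unfolding a_def by auto
  qed
  define e where "e = (if i = 0 then d else 0)"
  have e: "e \<le> d" "e \<noteq> i" "e = 0 \<or> e = d" using d2 unfolding e_def by auto
  have ae: "a e \<noteq> 0" using set[OF e(1,2)] s0 sd e(3) by auto
  define R where "R = (\<Sum>j\<in>{..d}-{i}. monom (a j) j)"
  have "coeff R e = a e" unfolding R_def using e by (simp add: coeff_sum coeff_monom)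
  hence R0: "R \<noteq> 0" using ae by auto
  have fin: "finite {n::nat. poly R (of_nat n) = 0}"
  proof -
    have "finite {x. poly R x = 0}" using R0 poly_roots_finite by blast
    hence "finite (of_nat -` {x. poly R x = 0} :: nat set)" by (rule finite_vimageI) (simp add: inj_on_def)
    thus ?thesis by (simp add: vimage_def)
  qed
  obtain n :: nat where n: "n \<notin> {n::nat. poly R (of_nat n) = 0}" "n > 0"
  proof -
    obtain m where m: "\<forall>x\<in>{n::nat. poly R (of_nat n) = 0}. x < m" using fin finite_nat_bounded by blast
    have "Suc m \<notin> {n::nat. poly R (of_nat n) = 0}"
    proof
      assume "Suc m \<in> {n::nat. poly R (of_nat n) = 0}"
      hence "Suc m < m" using m by blast
      thus False by simp
    qed
    thus ?thesis using that[of "Suc m"] by blast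
  qed
  define c where "c = - poly R (of_nat n) / of_nat n ^ i"
  have c0: "c \<noteq> 0" using n unfolding c_def by auto
  have legal: "legal_move d s i c" using iu c0 unfolding legal_move_def by auto
  have "(\<Sum>j\<le>d. the ((s(i := Some c)) j) * of_nat n ^ j) = c * of_nat n ^ i + (\<Sum>j\<in>{..d}-{i}. a j * of_nat n ^ j)"
    using iu by (simp add: sum.remove a_def)
  also have "(\<Sum>j\<in>{..d}-{i}. a j * of_nat n ^ j) = poly R (of_nat n)"
    unfolding R_def by (simp add: poly_sum poly_monom)
  also have "c * of_nat n ^ i + poly R (of_nat n) = 0" unfolding c_def using n by simp
  finally have z: "(\<Sum>j\<le>d. the ((s(i := Some c)) j) * of_nat n ^ j) = 0" .
  have "poly (map_poly of_rat (final_poly d (s(i := Some c)))) (of_nat n :: 'k)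
       = of_rat (\<Sum>j\<le>d. the ((s(i := Some c)) j) * of_nat n ^ j)"
    by (simp add: eval_final of_rat_sum of_rat_mult of_rat_power)
  also have "\<dots> = 0" using z by simp
  finally have "poly (map_poly of_rat (final_poly d (s(i := Some c)))) (of_nat n :: 'k) = 0" .
  moreover have "(of_nat n :: 'k) \<in> D" using of_nat_in_D[OF D] .
  ultimately show ?thesis using legal unfolding wanda_goal_def by blast
qed

definition nzset :: "nat \<Rightarrow> position \<Rightarrow> nat set" where
  "nzset d s = {j. j \<le> d \<and> s j \<noteq> None \<and> s j \<noteq> Some 0}"

definition c1set :: "nat \<Rightarrow> position \<Rightarrow> nat set" where
  "c1set d s = unset d s \<inter> {1, d - 1}"

definition midunset :: "nat \<Rightarrow> position \<Rightarrow> bool" where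
  "midunset d s \<longleftrightarrow> (\<exists>j. 0 < j \<and> j < d \<and> s j = None)"

definition InvN :: "nat \<Rightarrow> (position \<Rightarrow> bool) \<Rightarrow> nat \<Rightarrow> position \<Rightarrow> bool" where
  "InvN d G k s \<longleftrightarrow> (if k = 0 then G s else
     Base d k s \<and> k \<le> d + 1 \<and>
     (5 \<le> d \<longrightarrow> card (c1set d s) \<le> (k - 1) div 2) \<and>
     (d \<le> 4 \<longrightarrow> midunset d s \<longrightarrow> card (nzset d s) \<le> (d + 1) div 2 - k div 2))"

lemma nzset_finite: "finite (nzset d s)" unfolding nzset_def by auto

lemma nora_cond:
  assumes d2: "d \<ge> 2" and I: "InvN d G (Suc 0) s"
  obtains i where "unset d s = {i}" "s 0 \<noteq> Some 0" "s d \<noteq> Some 0"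
    "(i = 0 \<or> i = d) \<or> (5 \<le> d \<and> 2 \<le> i \<and> i + 2 \<le> d) \<or>
     (0 < i \<and> i < d \<and> (\<forall>j. 0 < j \<and> j < d \<and> j \<noteq> i \<longrightarrow> s j = Some 0))"
proof -
  have B: "card (unset d s) = 1" "s 0 \<noteq> Some 0" "s d \<noteq> Some 0" using I unfolding InvN_def Base_def by auto
  then obtain i where u: "unset d s = {i}" by (metis card_1_singletonE)
  have iu: "i \<le> d" "s i = None" using u unfolding unset_def by auto
  have "(i = 0 \<or> i = d) \<or> (5 \<le> d \<and> 2 \<le> i \<and> i + 2 \<le> d) \<or>
     (0 < i \<and> i < d \<and> (\<forall>j. 0 < j \<and> j < d \<and> j \<noteq> i \<longrightarrow> s j = Some 0))"
  proof (cases "i = 0 \<or> i = d")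
    case True thus ?thesis by blast
  next
    case False
    hence im: "0 < i" "i < d" using iu by auto
    show ?thesis
    proof (cases "5 \<le> d")
      case True
      hence "card (c1set d s) = 0" using I unfolding InvN_def by simp
      hence "c1set d s = {}" unfolding c1set_def using unset_finite[of d s] by simp
      hence "i \<noteq> 1" "i \<noteq> d - 1" using u unfolding c1set_def by auto
      thus ?thesis using True im by auto
    next
      case False
      hence d4: "d \<le> 4" by simp
      have "midunset d s" using im iu unfolding midunset_def by auto
      hence "card (nzset d s) \<le> (d + 1) div 2" using I d4 unfolding InvN_def by simp
      hence c2: "card (nzset d s) \<le> 2" using d4 by simp
      have sub: "{0, d} \<subseteq> nzset d s"
      proof -
        have "0 \<notin> unset d s" "d \<notin> unset d s" using u im by auto
        hence "s 0 \<noteq> None" "s d \<noteq> None" unfolding unset_def by auto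
        thus ?thesis using B unfolding nzset_def by auto
      qed
      have "card {0, d} = 2" using d2 by simp
      hence "card (nzset d s) \<le> card {0, d}" using c2 by simp
      hence "{0, d} = nzset d s" by (rule card_seteq[OF nzset_finite sub])
      hence eq: "nzset d s = {0, d}" by simp
      have "\<forall>j. 0 < j \<and> j < d \<and> j \<noteq> i \<longrightarrow> s j = Some 0"
      proof (intro allI impI)
        fix j assume j: "0 < j \<and> j < d \<and> j \<noteq> i"
        hence "j \<notin> unset d s" using u by auto
        hence "s j \<noteq> None" using j unfolding unset_def by auto
        moreover have "j \<notin> nzset d s" using eq j by auto
        ultimately show "s j = Some 0" using j unfolding nzset_def by auto
      qed
      thus ?thesis using im by blast
    qed
  qed
  thus ?thesis using that u B by blast
qed

context qp begin

lemma nora_last: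
  fixes D :: "'k set"
  assumes d2: "d \<ge> 2" and u: "unset d s = {i}" and s0: "s 0 \<noteq> Some 0" and sd: "s d \<noteq> Some 0"
    and cond: "(i = 0 \<or> i = d) \<or> (5 \<le> d \<and> 2 \<le> i \<and> i + 2 \<le> d) \<or>
     (0 < i \<and> i < d \<and> (\<forall>j. 0 < j \<and> j < d \<and> j \<noteq> i \<longrightarrow> s j = Some 0))"
  shows "\<exists>c. legal_move d s i c \<and> nora_goal d D (s(i := Some c))"
proof -
  define a where "a j = the (s j)" for j
  have iu: "i \<le> d" "s i = None" using u unfolding unset_def by auto
  have set: "s j = Some (a j)" if "j \<le> d" "j \<noteq> i" for j
  proof -
    have "j \<notin> unset d s" using u that by auto
    hence "s j \<noteq> None" using that unfolding unset_def by auto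
    thus ?thesis unfolding a_def by auto
  qed
  have a0: "i \<noteq> 0 \<Longrightarrow> a 0 \<noteq> 0" using set[of 0] s0 by auto
  have ad: "i \<noteq> d \<Longrightarrow> a d \<noteq> 0" using set[of d] sd by auto
  have ex: "\<exists>c. (i = 0 \<or> i = d \<longrightarrow> c \<noteq> 0) \<and> (\<forall>x::'k. (\<Sum>j\<le>d. of_rat ((a(i:=c)) j) * x^j) \<noteq> 0)"
  proof -
    consider "i = 0" | "i = d" | "5 \<le> d \<and> 2 \<le> i \<and> i + 2 \<le> d \<and> i \<noteq> 0 \<and> i \<noteq> d"
      | "0 < i \<and> i < d \<and> (\<forall>j. 0 < j \<and> j < d \<and> j \<noteq> i \<longrightarrow> s j = Some 0)"
      using cond by force
    thus ?thesis
    proof cases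
      case 1
      thus ?thesis using extreme0[of d a] d2 ad by auto
    next
      case 2
      thus ?thesis using extremed[of d a] d2 a0 by auto
    next
      case 3
      thus ?thesis using middle[of d i a] a0 ad by auto
    next
      case 4
      have "\<forall>j. 0 < j \<and> j < d \<and> j \<noteq> i \<longrightarrow> a j = 0" using 4 unfolding a_def by auto
      thus ?thesis using trinomial[of i d a] 4 a0 ad by auto
    qed
  qed
  then obtain c where c: "i = 0 \<or> i = d \<longrightarrow> c \<noteq> 0" "\<forall>x::'k. (\<Sum>j\<le>d. of_rat ((a(i:=c)) j) * x^j) \<noteq> 0"
    by blast
  have legal: "legal_move d s i c" using iu c(1) unfolding legal_move_def by auto
  have "\<forall>x::'k. poly (map_poly of_rat (final_poly d (s(i := Some c)))) x \<noteq> 0"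
  proof
    fix x :: 'k
    have "(\<Sum>j\<le>d. of_rat (the ((s(i := Some c)) j)) * x^j) = (\<Sum>j\<le>d. of_rat ((a(i:=c)) j) * x^j)"
      by (intro sum.cong) (auto simp: a_def)
    thus "poly (map_poly of_rat (final_poly d (s(i := Some c)))) x \<noteq> 0"
      using c(2) by (simp add: eval_final)
  qed
  thus ?thesis using legal unfolding nora_goal_def wanda_goal_def by blast
qed

end


lemma nora_step:
  assumes d2: "d \<ge> 2" and I: "InvN d G (Suc k) s" and od: "odd (Suc k)" and k0: "k \<noteq> 0"
  shows "\<exists>j v. legal_move d s j v \<and> InvN d G k (s(j := Some v))"
proof -
  have B: "Base d (Suc k) s" and kd: "Suc k \<le> d + 1"
    and c1: "5 \<le> d \<Longrightarrow> card (c1set d s) \<le> k div 2"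
    and nz: "d \<le> 4 \<Longrightarrow> midunset d s \<Longrightarrow> card (nzset d s) \<le> (d + 1) div 2 - Suc k div 2"
    using I unfolding InvN_def by auto
  have ek: "even k" using od by simp
  obtain j where j: "j \<in> unset d s" "s 1 = None \<longrightarrow> j = 1"
    "s 1 \<noteq> None \<and> s (d - 1) = None \<longrightarrow> j = d - 1" "midunset d s \<longrightarrow> 0 < j \<and> j < d"
  proof -
    consider "s 1 = None" | "s 1 \<noteq> None" "s (d - 1) = None" | "s 1 \<noteq> None" "s (d - 1) \<noteq> None" "midunset d s"
      | "s 1 \<noteq> None" "s (d - 1) \<noteq> None" "\<not> midunset d s" by blast
    thus ?thesis
    proof cases
      case 1 thus ?thesis using that[of 1] d2 unfolding unset_def by auto
    next
      case 2 thus ?thesis using that[of "d - 1"] d2 unfolding unset_def by auto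
    next
      case 3
      then obtain j where "0 < j" "j < d" "s j = None" unfolding midunset_def by blast
      thus ?thesis using that[of j] 3 unfolding unset_def by auto
    next
      case 4
      have "unset d s \<noteq> {}" using B unfolding Base_def by auto
      then obtain j where "j \<in> unset d s" by blast
      thus ?thesis using that[of j] 4 by auto
    qed
  qed
  define v :: rat where "v = (if j = 0 \<or> j = d then 1 else 0)"
  have legal: "legal_move d s j v" using j(1) unfolding unset_def legal_move_def v_def by auto
  define s' where "s' = s(j := Some v)"
  have B': "Base d k s'" unfolding s'_def by (rule Base_step[OF B legal])
  have c1': "card (c1set d s') \<le> (k - 1) div 2" if d5: "5 \<le> d"
  proof (cases "c1set d s = {}")
    case True
    hence "c1set d s' = {}" unfolding s'_def c1set_def using unset_upd[OF legal] by auto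
    thus ?thesis by simp
  next
    case False
    have "j \<in> c1set d s"
    proof -
      obtain t where t: "t \<in> unset d s" "t = 1 \<or> t = d - 1" using False unfolding c1set_def by auto
      hence "s t = None" unfolding unset_def by auto
      thus ?thesis using t j unfolding c1set_def by auto
    qed
    moreover have "c1set d s' = c1set d s - {j}" unfolding s'_def c1set_def using unset_upd[OF legal] by auto
    moreover have "finite (c1set d s)" unfolding c1set_def using unset_finite by auto
    ultimately have "card (c1set d s') = card (c1set d s) - 1" by simp
    moreover have "card (c1set d s) \<le> k div 2" using c1 d5 by simp
    moreover have "(k - 1) div 2 = k div 2 - 1" using ek k0 by (elim evenE) auto
    ultimately show ?thesis by linarith
  qed
  have nz': "card (nzset d s') \<le> (d + 1) div 2 - k div 2" if d4: "d \<le> 4" and mu: "midunset d s'"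
  proof -
    have mu0: "midunset d s" using mu unfolding midunset_def s'_def by (auto split: if_splits)
    hence jm: "0 < j" "j < d" using j by auto
    hence "v = 0" unfolding v_def by auto
    have "s j = None" using j unfolding unset_def by auto
    hence "nzset d s' = nzset d s" unfolding nzset_def s'_def using \<open>v = 0\<close> by auto
    moreover have "Suc k div 2 = k div 2" using ek by simp
    ultimately show ?thesis using nz[OF d4 mu0] by simp
  qed
  have "InvN d G k s'" unfolding InvN_def using k0 B' kd c1' nz' by auto
  thus ?thesis using legal unfolding s'_def by blast
qed

lemma nora_opp:
  assumes I: "InvN d G (Suc k) s" and ev: "even (Suc k)" and legal: "legal_move d s j v"
  shows "InvN d G k (s(j := Some v))"
proof -
  have ok: "odd k" using ev by simp
  have k0: "k \<noteq> 0" using ok by (intro notI) simp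
  have B: "Base d (Suc k) s" and kd: "Suc k \<le> d + 1"
    and c1: "5 \<le> d \<Longrightarrow> card (c1set d s) \<le> k div 2"
    and nz: "d \<le> 4 \<Longrightarrow> midunset d s \<Longrightarrow> card (nzset d s) \<le> (d + 1) div 2 - Suc k div 2"
    using I unfolding InvN_def by auto
  define s' where "s' = s(j := Some v)"
  have B': "Base d k s'" unfolding s'_def by (rule Base_step[OF B legal])
  have c1': "card (c1set d s') \<le> (k - 1) div 2" if d5: "5 \<le> d"
  proof -
    have "c1set d s' \<subseteq> c1set d s" unfolding s'_def c1set_def using unset_upd[OF legal] by auto
    moreover have "finite (c1set d s)" unfolding c1set_def using unset_finite by auto
    ultimately have "card (c1set d s') \<le> card (c1set d s)" by (rule card_mono[rotated])
    moreover have "(k - 1) div 2 = k div 2" using ok by (elim oddE) auto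
    ultimately show ?thesis using c1[OF d5] by linarith
  qed
  have nz': "card (nzset d s') \<le> (d + 1) div 2 - k div 2" if d4: "d \<le> 4" and mu: "midunset d s'"
  proof -
    have mu0: "midunset d s" using mu unfolding midunset_def s'_def by (auto split: if_splits)
    have "nzset d s' \<subseteq> insert j (nzset d s)" unfolding nzset_def s'_def by auto
    hence "card (nzset d s') \<le> card (insert j (nzset d s))" using nzset_finite by (intro card_mono) auto
    also have "\<dots> \<le> card (nzset d s) + 1" using nzset_finite by (simp add: card_insert_le_m1)
    finally have "card (nzset d s') \<le> card (nzset d s) + 1" .
    moreover have "Suc k div 2 = k div 2 + 1" using ok by (elim oddE) auto
    moreover have "Suc k div 2 \<le> (d + 1) div 2" using kd by (intro div_le_mono) auto
    ultimately show ?thesis using nz[OF d4 mu0] by linarith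
  qed
  show ?thesis unfolding InvN_def s'_def[symmetric] using k0 B' kd c1' nz' by auto
qed


theorem theorem2:
  fixes d p :: nat
    and av :: "'k::field_char_0 \<Rightarrow> real"
    and D :: "'k set"
    and wanda_first :: bool
  assumes "d > 1"
    and "prime p"
    and "is_Qp p av"
    and "unital_subring D"
  shows "if wanda_moves_last d wanda_first then wanda_wins d D wanda_first
         else nora_wins d D wanda_first"
proof -
  interpret qp p av using assms(2,3) by unfold_locales
  have d2: "d \<ge> 2" using assms(1) by simp
  have u0: "unset d (\<lambda>_. None) = {..d}" unfolding unset_def by auto
  have B0: "Base d (d + 1) (\<lambda>_. None)" unfolding Base_def u0 by simp
  show ?thesis
  proof (cases "wanda_moves_last d wanda_first")
    case True
    hence wf: "wanda_first = odd (d + 1)" unfolding wanda_moves_last_def by simp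
    define Inv where "Inv k s = (if k = 0 then wanda_goal d D s else Base d k s)" for k s
    have "can_force d (wanda_goal d D) (odd (d + 1)) (d + 1) (\<lambda>_. None)"
    proof (rule force_gen[where Inv = Inv])
      fix k s assume I: "Inv (Suc k) s" and od: "odd (Suc k)"
      have B: "Base d (Suc k) s" using I unfolding Inv_def by simp
      show "\<exists>i c. legal_move d s i c \<and> Inv k (s(i := Some c))"
      proof (cases "k = 0")
        case True
        have "card (unset d s) = 1" "s 0 \<noteq> Some 0" "s d \<noteq> Some 0" using B True unfolding Base_def by auto
        then obtain i where "unset d s = {i}" by (metis card_1_singletonE)
        then obtain c where "legal_move d s i c" "wanda_goal d D (s(i := Some c))"
          using wanda_last[OF d2 _ _ _ assms(4)] \<open>s 0 \<noteq> Some 0\<close> \<open>s d \<noteq> Some 0\<close> by blast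
        thus ?thesis using True unfolding Inv_def by auto
      next
        case False
        obtain j where j: "legal_move d s j 1" using exists_move[OF B] by blast
        have "Base d k (s(j := Some 1))" by (rule Base_step[OF B j])
        thus ?thesis using j False unfolding Inv_def by auto
      qed
    next
      fix k s i c assume I: "Inv (Suc k) s" and ev: "even (Suc k)" and l: "legal_move d s i c"
      have B: "Base d (Suc k) s" using I unfolding Inv_def by simp
      have "k \<noteq> 0" using ev by (intro notI) simp
      thus "Inv k (s(i := Some c))" using Base_step[OF B l] unfolding Inv_def by simp
    next
      fix s assume "Inv 0 s" thus "wanda_goal d D s" unfolding Inv_def by simp
    next
      show "Inv (d + 1) (\<lambda>_. None)" using B0 unfolding Inv_def by simp
    qed
    thus ?thesis using True wf unfolding wanda_wins_def by simp
  next
    case False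
    hence wf: "(\<not> wanda_first) = odd (d + 1)" unfolding wanda_moves_last_def by simp
    have "can_force d (nora_goal d D) (odd (d + 1)) (d + 1) (\<lambda>_. None)"
    proof (rule force_gen[where Inv = "InvN d (nora_goal d D)"])
      fix k s assume I: "InvN d (nora_goal d D) (Suc k) s" and od: "odd (Suc k)"
      show "\<exists>i c. legal_move d s i c \<and> InvN d (nora_goal d D) k (s(i := Some c))"
      proof (cases "k = 0")
        case True
        obtain i where i: "unset d s = {i}" "s 0 \<noteq> Some 0" "s d \<noteq> Some 0"
          "(i = 0 \<or> i = d) \<or> (5 \<le> d \<and> 2 \<le> i \<and> i + 2 \<le> d) \<or>
           (0 < i \<and> i < d \<and> (\<forall>j. 0 < j \<and> j < d \<and> j \<noteq> i \<longrightarrow> s j = Some 0))"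
          using nora_cond[OF d2] I True by blast
        obtain c where "legal_move d s i c" "nora_goal d D (s(i := Some c))"
          using nora_last[OF d2 i] by blast
        thus ?thesis using True unfolding InvN_def by auto
      next
        case False
        thus ?thesis using nora_step[OF d2 I od] by blast
      qed
    next
      fix k s i c assume "InvN d (nora_goal d D) (Suc k) s" "even (Suc k)" "legal_move d s i c"
      thus "InvN d (nora_goal d D) k (s(i := Some c))" by (rule nora_opp)
    next
      fix s assume "InvN d (nora_goal d D) 0 s" thus "nora_goal d D s" unfolding InvN_def by simp
    next
      have "c1set d (\<lambda>_. None) \<subseteq> {1, d - 1}" unfolding c1set_def by auto
      hence "card (c1set d (\<lambda>_. None)) \<le> card {1, d - 1::nat}" by (intro card_mono) auto
      also have "card {1, d - 1::nat} \<le> 2" by (cases "1 = d - 1") auto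
      finally have "card (c1set d (\<lambda>_. None)) \<le> 2" .
      moreover have "nzset d (\<lambda>_. None) = {}" unfolding nzset_def by simp
      ultimately show "InvN d (nora_goal d D) (d + 1) (\<lambda>_. None)"
        unfolding InvN_def using B0 by auto
    qed
    thus ?thesis using False wf unfolding nora_wins_def by simp
  qed
qed

end
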